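(* Let $(\Omega,\Sigma,\mu)$ be a non-atomic measure space, let $A_1,\dots,A_n\in\Sigma$ be pairwise disjoint with $Y=\operatorname{span}\{\chi_{A_i}:1\le i\le n\}$ an $n$-dimensional subspace of $L_1(\mu)$, and suppose $\mu\big(\Omega\setminus\bigcup_{i=1}^nA_i\big)>0$. Then $Y$ does not have property-$(k-U)$ in $L_1(\mu)$ for any $k\in\mathbb N$.
   Context: For a closed subspace $Y$ of $X$ and $y^*\in Y^*$, $HB(y^* )=\{x^*\in X^*:x^*|_Y=y^*,\ \|x^*\|=\|y^*\|\}$; for a set $A$ and $a\in A$, $\dim A=\dim\operatorname{span}(A-a)$. $Y$ has property-$(k-U)$ in $X$ if $\dim HB(y^* )\le k-1$ for all $y^*\in S_{Y^*}$. *)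

theory Defs
  imports "HOL-Analysis.Analysis"
begin

text \<open>Elements of a dual space are represented as maps
  ('a => real) => real that are linear and bounded on the relevant subspace and
  vanish outside it (bounded functionals automatically respect a.e. equality,
  so this is exactly the dual of the quotient space L_1(mu)).\<close>

definition nonatomic :: "'a measure \<Rightarrow> bool" where
  "nonatomic M \<longleftrightarrow> (\<forall>A\<in>sets M. 0 < emeasure M A \<longrightarrow>
      (\<exists>B\<in>sets M. B \<subseteq> A \<and> 0 < emeasure M B \<and> emeasure M B < emeasure M A))"

definition L1 :: "'a measure \<Rightarrow> ('a \<Rightarrow> real) set" where
  "L1 M = {f. integrable M f}"

definition l1norm :: "'a measure \<Rightarrow> ('a \<Rightarrow> real) \<Rightarrow> real" where
  "l1norm M f = (\<integral>x. \<bar>f x\<bar> \<partial>M)"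

definition dual_elem :: "'a measure \<Rightarrow> ('a \<Rightarrow> real) set \<Rightarrow> (('a \<Rightarrow> real) \<Rightarrow> real) \<Rightarrow> bool" where
  "dual_elem M V \<phi> \<longleftrightarrow>
     (\<forall>f\<in>V. \<forall>g\<in>V. \<phi> (\<lambda>x. f x + g x) = \<phi> f + \<phi> g) \<and>
     (\<forall>c. \<forall>f\<in>V. \<phi> (\<lambda>x. c * f x) = c * \<phi> f) \<and>
     (\<exists>C. \<forall>f\<in>V. \<bar>\<phi> f\<bar> \<le> C * l1norm M f) \<and>
     (\<forall>f. f \<notin> V \<longrightarrow> \<phi> f = 0)"

definition dual_norm :: "'a measure \<Rightarrow> ('a \<Rightarrow> real) set \<Rightarrow> (('a \<Rightarrow> real) \<Rightarrow> real) \<Rightarrow> real" where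
  "dual_norm M V \<phi> = (SUP f\<in>{f\<in>V. l1norm M f \<le> 1}. \<bar>\<phi> f\<bar>)"

definition HB :: "'a measure \<Rightarrow> ('a \<Rightarrow> real) set \<Rightarrow> (('a \<Rightarrow> real) \<Rightarrow> real)
                  \<Rightarrow> (('a \<Rightarrow> real) \<Rightarrow> real) set" where
  "HB M Y y = {x. dual_elem M (L1 M) x \<and> (\<forall>f\<in>Y. x f = y f)
                  \<and> dual_norm M (L1 M) x = dual_norm M Y y}"

text \<open>dim S \<le> m, where dim S = dim span (S - a): some finite family of at most m
  functionals spans S - a (for every/any a in S).\<close>
definition affdim_le :: "(('a \<Rightarrow> real) \<Rightarrow> real) set \<Rightarrow> nat \<Rightarrow> bool" where
  "affdim_le S m \<longleftrightarrow> (\<forall>a\<in>S. \<exists>B. finite B \<and> card B \<le> m \<and>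
      (\<forall>x\<in>S. \<exists>c. \<forall>f. x f - a f = (\<Sum>b\<in>B. c b * b f)))"

definition property_kU :: "'a measure \<Rightarrow> ('a \<Rightarrow> real) set \<Rightarrow> nat \<Rightarrow> bool" where
  "property_kU M Y k \<longleftrightarrow>
     (\<forall>y. dual_elem M Y y \<and> dual_norm M Y y = 1 \<longrightarrow> affdim_le (HB M Y y) (k - 1))"

definition char_span :: "(nat \<Rightarrow> 'a set) \<Rightarrow> nat \<Rightarrow> ('a \<Rightarrow> real) set" where
  "char_span A n = {f. \<exists>c. f = (\<lambda>x. \<Sum>i<n. c i * indicator (A i) x)}"

end

theory Submission
  imports Defs "HOL-Library.Function_Algebras"
begin

lemma sum_fun_app: "(sum g S :: 'b \<Rightarrow> real) x = (\<Sum>s\<in>S. g s x)"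
  by (induction S rule: infinite_finite_induct) auto

lemma lin_bound:
  fixes d :: "nat \<Rightarrow> ('b \<Rightarrow> real)" and t :: "nat \<Rightarrow> 'b" and B :: "('b\<Rightarrow>real) set"
  assumes fin: "finite B"
    and sp: "\<forall>j<k. \<exists>c. \<forall>f. d j f = (\<Sum>b\<in>B. c b * b f)"
    and diag: "\<And>j. j < k \<Longrightarrow> d j (t j) \<noteq> 0"
    and off: "\<And>j l. j < k \<Longrightarrow> l < k \<Longrightarrow> j \<noteq> l \<Longrightarrow> d j (t l) = 0"
  shows "k \<le> card B"
proof -
  interpret vs: vector_space "\<lambda>c (\<phi>::'b\<Rightarrow>real). (\<lambda>f. c * \<phi> f)"
    by unfold_locales (auto simp: fun_eq_iff algebra_simps)
  have inj: "inj_on d {..<k}"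
  proof (rule inj_onI)
    fix j l assume j: "j \<in> {..<k}" and l: "l \<in> {..<k}" and e: "d j = d l"
    show "j = l"
    proof (rule ccontr)
      assume "j \<noteq> l"
      then have "d l (t j) = 0" using off j l by auto
      moreover have "d j (t j) \<noteq> 0" using diag j by auto
      ultimately show False using e by simp
    qed
  qed
  have sub: "d ` {..<k} \<subseteq> vs.span B"
  proof
    fix x assume "x \<in> d ` {..<k}"
    then obtain j where j: "j < k" "x = d j" by auto
    obtain c where c: "\<forall>f. d j f = (\<Sum>b\<in>B. c b * b f)" using sp j by auto
    have "d j = (\<Sum>b\<in>B. (\<lambda>f. c b * b f))"
      by (rule ext) (simp add: c sum_fun_app)
    moreover have "(\<Sum>b\<in>B. (\<lambda>f. c b * b f)) \<in> vs.span B"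
      by (intro vs.span_sum vs.span_scale vs.span_base)
    ultimately show "x \<in> vs.span B" using j by simp
  qed
  have ind: "vs.independent (d ` {..<k})"
  proof (rule vs.independent_if_scalars_zero)
    show "finite (d ` {..<k})" by simp
    fix g x assume s: "(\<Sum>x\<in>d ` {..<k}. (\<lambda>f. g x * x f)) = 0" and x: "x \<in> d ` {..<k}"
    then obtain l where l: "l < k" "x = d l" by auto
    have "0 = (\<Sum>x\<in>d ` {..<k}. (\<lambda>f. g x * x f)) (t l)" using s by simp
    also have "\<dots> = (\<Sum>j<k. g (d j) * d j (t l))"
      by (simp add: sum_fun_app sum.reindex[OF inj])
    also have "\<dots> = (\<Sum>j\<in>{l}. g (d j) * d j (t l))"
      by (rule sum.mono_neutral_right) (use l off in auto)
    also have "\<dots> = g (d l) * d l (t l)" by simp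
    finally show "g x = 0" using diag l by simp
  qed
  have "card (d ` {..<k}) \<le> card B" using vs.independent_span_bound[OF fin ind sub] by simp
  moreover have "card (d ` {..<k}) = k" using card_image[OF inj] by simp
  ultimately show ?thesis by simp
qed

lemma split_sets:
  fixes M :: "'a measure" and k :: nat
  assumes na: "nonatomic M" and C: "C \<in> sets M" and pos: "0 < emeasure M C"
  shows "\<exists>D. (\<forall>j<k. D j \<in> sets M \<and> D j \<subseteq> C \<and> 0 < emeasure M (D j) \<and> emeasure M (D j) < \<infinity>)
      \<and> (\<forall>j<k. \<forall>l<k. j \<noteq> l \<longrightarrow> D j \<inter> D l = {})"
proof -
  obtain E where E: "E \<in> sets M" "E \<subseteq> C" "0 < emeasure M E" "emeasure M E < \<infinity>"
  proof (cases "emeasure M C < \<infinity>")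
    case True then show ?thesis by (rule that[OF C subset_refl pos])
  next
    case False
    have "\<exists>B\<in>sets M. B \<subseteq> C \<and> 0 < emeasure M B \<and> emeasure M B < emeasure M C"
      using na[unfolded nonatomic_def, rule_format, OF C pos] .
    then obtain B where B1: "B \<in> sets M" and B2: "B \<subseteq> C" and B3: "0 < emeasure M B" and B4: "emeasure M B < emeasure M C"
      by (elim bexE conjE)
    have B5: "emeasure M B < \<infinity>" using less_le_trans[OF B4 top_greatest] by simp
    show ?thesis by (rule that[OF B1 B2 B3 B5])
  qed
  have "\<exists>D R. R \<in> sets M \<and> R \<subseteq> C \<and> 0 < emeasure M R \<and> emeasure M R < \<infinity> \<and>
      (\<forall>j<k. D j \<in> sets M \<and> D j \<subseteq> C \<and> 0 < emeasure M (D j) \<and> emeasure M (D j) < \<infinity> \<and> D j \<inter> R = {})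
      \<and> (\<forall>j<k. \<forall>l<k. j \<noteq> l \<longrightarrow> D j \<inter> D l = {})"
  proof (induction k)
    case 0
    show ?case using E by (intro exI[of _ "\<lambda>_. {}"] exI[of _ E]) simp
  next
    case (Suc k)
    from Suc.IH obtain D R where R1: "R \<in> sets M" and R2: "R \<subseteq> C" and R3: "0 < emeasure M R" and R4: "emeasure M R < \<infinity>"
      and D: "\<forall>j<k. D j \<in> sets M \<and> D j \<subseteq> C \<and> 0 < emeasure M (D j) \<and> emeasure M (D j) < \<infinity> \<and> D j \<inter> R = {}"
      and Dd: "\<forall>j<k. \<forall>l<k. j \<noteq> l \<longrightarrow> D j \<inter> D l = {}" by (elim exE conjE)
    note R = R1 R2 R3 R4
    have "\<exists>B\<in>sets M. B \<subseteq> R \<and> 0 < emeasure M B \<and> emeasure M B < emeasure M R"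
      using na[unfolded nonatomic_def, rule_format, OF R1 R3] .
    then obtain B where B1: "B \<in> sets M" and B2: "B \<subseteq> R" and B3: "0 < emeasure M B" and B4: "emeasure M B < emeasure M R"
      by (elim bexE conjE)
    note B = B1 B2 B3 B4
    have Bf: "emeasure M B < \<infinity>" using B R by auto
    have "emeasure M (R - B) = emeasure M R - emeasure M B"
      using B Bf R by (intro emeasure_Diff) auto
    then have RB: "0 < emeasure M (R - B)" using B by (simp add: diff_gr0_ennreal)
    have RBf: "emeasure M (R - B) < \<infinity>"
      using R(4) emeasure_mono[of "R - B" R M] R(1) by auto
    define D' where "D' = D(k := B)"
    have P1: "\<forall>j<Suc k. D' j \<in> sets M \<and> D' j \<subseteq> C \<and> 0 < emeasure M (D' j) \<and> emeasure M (D' j) < \<infinity> \<and> D' j \<inter> (R - B) = {}"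
    proof (intro allI impI)
      fix j assume "j < Suc k"
      then consider "j < k" | "j = k" by linarith
      then show "D' j \<in> sets M \<and> D' j \<subseteq> C \<and> 0 < emeasure M (D' j) \<and> emeasure M (D' j) < \<infinity> \<and> D' j \<inter> (R - B) = {}"
      proof cases
        case 1
        then have "D' j = D j" unfolding D'_def by simp
        then show ?thesis using D[rule_format, OF 1] by auto
      next
        case 2
        then have "D' j = B" unfolding D'_def by simp
        then show ?thesis using B Bf R by auto
      qed
    qed
    have P2: "\<forall>j<Suc k. \<forall>l<Suc k. j \<noteq> l \<longrightarrow> D' j \<inter> D' l = {}"
    proof (intro allI impI)
      fix j l assume jl: "j < Suc k" "l < Suc k" "j \<noteq> l"
      have a: "D' j \<inter> D' l = {}" if "j < k" "l < k" "j \<noteq> l" for j l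
        using Dd that unfolding D'_def by simp
      have b: "D' k \<inter> D' l = {}" if "l < k" for l
      proof -
        have "D' k = B" "D' l = D l" using that unfolding D'_def by auto
        then show ?thesis using D[rule_format, OF that] B(2) by auto
      qed
      show "D' j \<inter> D' l = {}"
      proof (cases "j < k")
        case True
        show ?thesis
        proof (cases "l < k")
          case True
          then show ?thesis using a \<open>j < k\<close> jl(3) by simp
        next
          case False
          then have "l = k" using jl(2) by simp
          then show ?thesis using b[OF \<open>j < k\<close>] by (simp add: Int_commute)
        qed
      next
        case False
        then have "j = k" using jl(1) by simp
        then have "l < k" using jl by simp
        then show ?thesis using b \<open>j = k\<close> by simp
      qed
    qed
    show ?case
    proof (intro exI[of _ D'] exI[of _ "R - B"] conjI)
      show "R - B \<in> sets M" using R(1) B(1) by auto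
      show "R - B \<subseteq> C" using R(2) by auto
      show "0 < emeasure M (R - B)" by (fact RB)
      show "emeasure M (R - B) < \<infinity>" by (fact RBf)
    qed (fact P1, fact P2)
  qed
  then obtain D R where "\<forall>j<k. D j \<in> sets M \<and> D j \<subseteq> C \<and> 0 < emeasure M (D j) \<and> emeasure M (D j) < \<infinity> \<and> D j \<inter> R = {}"
      and Dd: "\<forall>j<k. \<forall>l<k. j \<noteq> l \<longrightarrow> D j \<inter> D l = {}" by (elim exE conjE)
  then have "\<forall>j<k. D j \<in> sets M \<and> D j \<subseteq> C \<and> 0 < emeasure M (D j) \<and> emeasure M (D j) < \<infinity>" by simp
  then show ?thesis using Dd by (intro exI[of _ D] conjI)
qed

lemma dn_eq1:
  assumes "f0 \<in> V" "l1norm M f0 \<le> 1" "\<bar>\<phi> f0\<bar> = 1" "\<And>f. f \<in> V \<Longrightarrow> \<bar>\<phi> f\<bar> \<le> l1norm M f"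
  shows "dual_norm M V \<phi> = 1"
  unfolding dual_norm_def
proof (rule antisym)
  show "(SUP f\<in>{f \<in> V. l1norm M f \<le> 1}. \<bar>\<phi> f\<bar>) \<le> 1"
    by (rule cSUP_least) (use assms in force)+
  have bdd: "bdd_above ((\<lambda>f. \<bar>\<phi> f\<bar>) ` {f \<in> V. l1norm M f \<le> 1})"
    by (rule bdd_aboveI[of _ 1]) (use assms in force)
  have "\<bar>\<phi> f0\<bar> \<le> (SUP f\<in>{f \<in> V. l1norm M f \<le> 1}. \<bar>\<phi> f\<bar>)"
    by (rule cSUP_upper[OF _ bdd]) (use assms in auto)
  then show "1 \<le> (SUP f\<in>{f \<in> V. l1norm M f \<le> 1}. \<bar>\<phi> f\<bar>)" using assms by simp
qed

lemma abs_bound: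
  fixes f g :: "'a \<Rightarrow> real"
  assumes "integrable M f" "integrable M (\<lambda>x. f x * g x)" "\<And>x. \<bar>g x\<bar> \<le> 1"
  shows "\<bar>\<integral>x. f x * g x \<partial>M\<bar> \<le> l1norm M f"
proof -
  have "\<bar>\<integral>x. f x * g x \<partial>M\<bar> \<le> (\<integral>x. \<bar>f x * g x\<bar> \<partial>M)"
    using integral_norm_bound[of M "\<lambda>x. f x * g x"] by simp
  also have "\<dots> \<le> (\<integral>x. \<bar>f x\<bar> \<partial>M)"
  proof (rule integral_mono)
    fix x show "\<bar>f x * g x\<bar> \<le> \<bar>f x\<bar>"
      using assms(3)[of x] by (simp add: abs_mult mult_left_le)
  qed (use assms in auto)
  finally show ?thesis unfolding l1norm_def .
qed


lemma Y_int:
  assumes "\<forall>i<n. A i \<in> sets M" "\<forall>i<n. 0 < emeasure M (A i) \<and> emeasure M (A i) < \<infinity>"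
    and "f \<in> char_span A n"
  shows "integrable M f"
proof -
  obtain c where c: "f = (\<lambda>x. \<Sum>i<n. c i * indicator (A i) x)" using assms(3) unfolding char_span_def by blast
  have "\<And>i. i \<in> {..<n} \<Longrightarrow> integrable M (\<lambda>x. c i * indicator (A i) x :: real)"
    using assms(1,2) by (auto intro!: integrable_mult_right integrable_real_indicator)
  then show ?thesis unfolding c by (rule Bochner_Integration.integrable_sum[where I="{..<n}" and f="\<lambda>i x. c i * indicator (A i) x"])
qed

lemma Y_add:
  assumes "f \<in> char_span A n" "g \<in> char_span A n"
  shows "(\<lambda>x. f x + g x) \<in> char_span A n"
proof -
  obtain c where c: "f = (\<lambda>x. \<Sum>i<n. c i * indicator (A i) x)" using assms(1) unfolding char_span_def by blast
  obtain d where d: "g = (\<lambda>x. \<Sum>i<n. d i * indicator (A i) x)" using assms(2) unfolding char_span_def by blast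
  have e: "(\<lambda>x. f x + g x) = (\<lambda>x. \<Sum>i<n. (c i + d i) * indicator (A i) x)"
    unfolding c d by (simp only: distrib_right sum.distrib)
  show ?thesis unfolding char_span_def mem_Collect_eq by (rule exI[of _ "\<lambda>i. c i + d i"], rule e)
qed

lemma Y_scale:
  assumes "f \<in> char_span A n"
  shows "(\<lambda>x. a * f x) \<in> char_span A n"
proof -
  obtain c where c: "f = (\<lambda>x. \<Sum>i<n. c i * indicator (A i) x)" using assms(1) unfolding char_span_def by blast
  have e: "(\<lambda>x. a * f x) = (\<lambda>x. \<Sum>i<n. (a * c i) * indicator (A i) x)"
    unfolding c by (simp only: sum_distrib_left mult.assoc)
  show ?thesis unfolding char_span_def mem_Collect_eq by (rule exI[of _ "\<lambda>i. a * c i"], rule e)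
qed

lemma Y_zero:
  assumes "f \<in> char_span A n" "\<forall>i<n. x \<notin> A i"
  shows "f x = 0"
proof -
  obtain c where c: "f = (\<lambda>x. \<Sum>i<n. c i * indicator (A i) x)" using assms(1) unfolding char_span_def by blast
  have "\<forall>i\<in>{..<n}. c i * indicator (A i) x = (0::real)" using assms(2) by auto
  then show ?thesis unfolding c by (simp only: sum.neutral)
qed


lemma int_mult_bdd:
  fixes f h :: "'a \<Rightarrow> real"
  assumes "integrable M f" "h \<in> borel_measurable M" "\<And>x. \<bar>h x\<bar> \<le> 1"
  shows "integrable M (\<lambda>x. f x * h x)"
proof (rule Bochner_Integration.integrable_bound[OF assms(1)])
  show "(\<lambda>x. f x * h x) \<in> borel_measurable M"
    using assms(1,2) by (intro borel_measurable_times) auto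
  show "AE x in M. norm (f x * h x) \<le> norm (f x)"
    using assms(3) by (auto simp: abs_mult mult_left_le)
qed

lemma int_dual:
  fixes V :: "('a \<Rightarrow> real) set" and h :: "'a \<Rightarrow> real"
  assumes int: "\<forall>f\<in>V. integrable M f" and add: "\<forall>f\<in>V. \<forall>g\<in>V. (\<lambda>x. f x + g x) \<in> V"
    and scl: "\<forall>c. \<forall>f\<in>V. (\<lambda>x. c * f x) \<in> V"
    and hm: "h \<in> borel_measurable M" and hb: "\<And>x. \<bar>h x\<bar> \<le> 1"
  shows "dual_elem M V (\<lambda>f. if f \<in> V then \<integral>x. f x * h x \<partial>M else 0)"
  unfolding dual_elem_def
proof (intro conjI ballI allI impI)
  fix f g assume f: "f \<in> V" and g: "g \<in> V"
  have i1: "integrable M (\<lambda>x. f x * h x)" "integrable M (\<lambda>x. g x * h x)"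
    using int f g hm hb by (auto intro!: int_mult_bdd)
  have "(\<integral>x. (f x + g x) * h x \<partial>M) = (\<integral>x. f x * h x + g x * h x \<partial>M)"
    by (simp add: distrib_right)
  also have "\<dots> = (\<integral>x. f x * h x \<partial>M) + (\<integral>x. g x * h x \<partial>M)"
    by (rule Bochner_Integration.integral_add[OF i1])
  finally show "(if (\<lambda>x. f x + g x) \<in> V then \<integral>x. (f x + g x) * h x \<partial>M else 0) =
       (if f \<in> V then \<integral>x. f x * h x \<partial>M else 0) + (if g \<in> V then \<integral>x. g x * h x \<partial>M else 0)"
    using add f g by simp
next
  fix c f assume f: "f \<in> V"
  have "(\<integral>x. c * f x * h x \<partial>M) = c * (\<integral>x. f x * h x \<partial>M)"
    by (simp add: mult.assoc)
  then show "(if (\<lambda>x. c * f x) \<in> V then \<integral>x. c * f x * h x \<partial>M else 0) =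
       c * (if f \<in> V then \<integral>x. f x * h x \<partial>M else 0)"
    using scl f by simp
next
  show "\<exists>C. \<forall>f\<in>V. \<bar>if f \<in> V then \<integral>x. f x * h x \<partial>M else 0\<bar> \<le> C * l1norm M f"
  proof (intro exI[of _ 1] ballI)
    fix f assume f: "f \<in> V"
    then have "\<bar>\<integral>x. f x * h x \<partial>M\<bar> \<le> l1norm M f"
      using int hm hb by (intro abs_bound int_mult_bdd) auto
    then show "\<bar>if f \<in> V then \<integral>x. f x * h x \<partial>M else 0\<bar> \<le> 1 * l1norm M f" using f by simp
  qed
next
  fix f assume "f \<notin> V"
  then show "(if f \<in> V then \<integral>x. f x * h x \<partial>M else 0) = 0" by simp
qed


theorem theorem4p6:
  fixes M :: "'a measure" and A :: "nat \<Rightarrow> 'a set" and n :: nat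
  assumes "nonatomic M"
    and "n \<ge> 1"
    and "\<forall>i<n. A i \<in> sets M"
    and "disjoint_family_on A {..<n}"
    and "\<forall>i<n. 0 < emeasure M (A i) \<and> emeasure M (A i) < \<infinity>"
    and "0 < emeasure M (space M - (\<Union>i<n. A i))"
  shows "\<forall>k::nat. k \<ge> 1 \<longrightarrow> \<not> property_kU M (char_span A n) k"
proof (intro allI impI notI)
  fix k :: nat assume k1: "k \<ge> 1" and kU: "property_kU M (char_span A n) k"
  define Y where "Y = char_span A n"
  define C where "C = space M - (\<Union>i<n. A i)"
  define A0 where "A0 = A 0"
  define m where "m = measure M A0"
  have n0: "0 < n" using assms(2) by simp
  have A0s: "A0 \<in> sets M" using assms(3) n0 unfolding A0_def by simp
  have A0e: "0 < emeasure M A0" "emeasure M A0 < \<infinity>" using assms(5) n0 unfolding A0_def by auto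
  have em: "emeasure M A0 = ennreal m" unfolding m_def using A0e(2) by (intro emeasure_eq_ennreal_measure) simp
  have mpos: "0 < m" using A0e(1) em by simp
  have Cs: "C \<in> sets M" unfolding C_def using assms(3) by auto
  have Yint: "\<forall>f\<in>Y. integrable M f" unfolding Y_def using assms(3,5) Y_int by blast
  have Yadd: "\<forall>f\<in>Y. \<forall>g\<in>Y. (\<lambda>x. f x + g x) \<in> Y" unfolding Y_def using Y_add by blast
  have Yscl: "\<forall>c. \<forall>f\<in>Y. (\<lambda>x. c * f x) \<in> Y" unfolding Y_def using Y_scale by blast
  define f0 where "f0 = (\<lambda>x. indicator A0 x / m :: real)"
  have f0Y: "f0 \<in> Y"
  proof -
    have "f0 x = (\<Sum>i<n. (if i = 0 then 1 / m else 0) * indicator (A i) x)" for x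
    proof -
      have "(\<Sum>i<n. (if i = 0 then 1 / m else 0) * indicator (A i) x) =
            (\<Sum>i<n. if i = 0 then indicator (A 0) x / m else (0::real))"
        by (rule sum.cong) auto
      also have "\<dots> = indicator (A 0) x / m" using n0 by simp
      finally show ?thesis unfolding f0_def A0_def by simp
    qed
    then have e: "f0 = (\<lambda>x. \<Sum>i<n. (if i = 0 then 1 / m else 0) * indicator (A i) x)" by blast
    show ?thesis unfolding Y_def char_span_def mem_Collect_eq
      by (rule exI[of _ "\<lambda>i. if i = 0 then 1 / m else 0"], rule e)
  qed
  have f0int: "integrable M f0" using Yint f0Y by blast
  have intA0: "(\<integral>x. indicator A0 x \<partial>M) = m"
    using A0s sets.sets_into_space[OF A0s] unfolding m_def by (simp add: Int_absorb2)
  have f0n: "l1norm M f0 = 1"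
  proof -
    have "l1norm M f0 = (\<integral>x. indicator A0 x / m \<partial>M)"
      unfolding l1norm_def f0_def using mpos by (intro Bochner_Integration.integral_cong) auto
    also have "\<dots> = 1" using intA0 mpos by simp
    finally show ?thesis .
  qed
  have L1add: "\<forall>f\<in>L1 M. \<forall>g\<in>L1 M. (\<lambda>x. f x + g x) \<in> L1 M" unfolding L1_def by auto
  have L1scl: "\<forall>c. \<forall>f\<in>L1 M. (\<lambda>x. c * f x) \<in> L1 M" unfolding L1_def by auto
  have L1int: "\<forall>f\<in>L1 M. integrable M f" unfolding L1_def by auto
  define y where "y = (\<lambda>f. if f \<in> Y then \<integral>x. f x * indicator A0 x \<partial>M else 0)"
  have ydual: "dual_elem M Y y"
    unfolding y_def using Yint Yadd Yscl A0s by (intro int_dual) auto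
  have yf0: "y f0 = 1"
  proof -
    have "y f0 = (\<integral>x. f0 x * indicator A0 x \<partial>M)"
      unfolding y_def using f0Y by simp
    also have "\<dots> = (\<integral>x. indicator A0 x / m \<partial>M)"
      unfolding f0_def by (intro Bochner_Integration.integral_cong) (auto simp: indicator_def)
    finally have "y f0 = (\<integral>x. indicator A0 x / m \<partial>M)" .
    then show ?thesis using intA0 mpos by simp
  qed
  have ynorm: "dual_norm M Y y = 1"
  proof (rule dn_eq1[OF f0Y])
    show "l1norm M f0 \<le> 1" using f0n by simp
    show "\<bar>y f0\<bar> = 1" using yf0 by simp
    fix f assume "f \<in> Y"
    then show "\<bar>y f\<bar> \<le> l1norm M f" unfolding y_def using Yint A0s
      by (simp, intro abs_bound int_mult_bdd) auto
  qed
  define X where "X = (\<lambda>E f. if f \<in> L1 M then \<integral>x. f x * (indicator A0 x + indicator E x) \<partial>M else 0)"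
  have XHB: "X E \<in> HB M Y y" if Es: "E \<in> sets M" and EC: "E \<subseteq> C" for E
  proof -
    have dA: "\<forall>i<n. \<forall>x\<in>E. x \<notin> A i" using EC unfolding C_def by blast
    have E0: "E \<inter> A0 = {}" using dA n0 unfolding A0_def by blast
    have hb: "\<And>x. \<bar>indicator A0 x + indicator E x :: real\<bar> \<le> 1"
      using E0 by (auto simp: indicator_def)
    have hm: "(\<lambda>x. indicator A0 x + indicator E x :: real) \<in> borel_measurable M"
      using A0s Es by measurable
    have Xd: "dual_elem M (L1 M) (X E)"
      unfolding X_def using L1int L1add L1scl hm hb by (intro int_dual) auto
    have agree: "X E f = y f" if f: "f \<in> Y" for f
    proof -
      have "f \<in> L1 M" using Yint f unfolding L1_def by auto
      moreover have pw1: "f x * (indicator A0 x + indicator E x) = f x * indicator A0 x" for x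
      proof (cases "x \<in> E")
        case True
        then have "f x = 0" using Y_zero[of f A n x] f dA unfolding Y_def by blast
        then show ?thesis by simp
      qed simp
      then have pw: "(\<lambda>x. f x * (indicator A0 x + indicator E x)) = (\<lambda>x. f x * indicator A0 x)" by (rule ext)
      ultimately show ?thesis unfolding X_def y_def pw using f by simp
    qed
    have Xn: "dual_norm M (L1 M) (X E) = 1"
    proof (rule dn_eq1)
      show "f0 \<in> L1 M" using f0int unfolding L1_def by simp
      show "l1norm M f0 \<le> 1" using f0n by simp
      show "\<bar>X E f0\<bar> = 1" using agree[OF f0Y] yf0 by simp
      fix f assume "f \<in> L1 M"
      then show "\<bar>X E f\<bar> \<le> l1norm M f" unfolding X_def using L1int hm hb
        by (simp, intro abs_bound int_mult_bdd) auto
    qed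
    show ?thesis unfolding HB_def using Xd agree Xn ynorm by simp
  qed
  have aff: "affdim_le (HB M Y y) (k - 1)"
    using kU ydual ynorm unfolding property_kU_def Y_def by blast
  have aHB: "X {} \<in> HB M Y y" using XHB by simp
  obtain B where B: "finite B" "card B \<le> k - 1"
    and Bsp: "\<forall>x\<in>HB M Y y. \<exists>c. \<forall>f. x f - X {} f = (\<Sum>b\<in>B. c b * b f)"
    using aff aHB unfolding affdim_le_def by blast
  have Cpos: "0 < emeasure M C" using assms(6) unfolding C_def .
  obtain D where D: "\<forall>j<k. D j \<in> sets M \<and> D j \<subseteq> C \<and> 0 < emeasure M (D j) \<and> emeasure M (D j) < \<infinity>"
    and Dd: "\<forall>j<k. \<forall>l<k. j \<noteq> l \<longrightarrow> D j \<inter> D l = {}"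
    using split_sets[OF assms(1) Cs Cpos, of k] by blast
  define d where "d = (\<lambda>j f. X (D j) f - X {} f)"
  define t where "t = (\<lambda>l x. indicator (D l) x :: real)"
  have dval: "d j (t l) = measure M (D l \<inter> D j)" if j: "j < k" and l: "l < k" for j l
  proof -
    have Dl: "D l \<in> sets M" "D l \<subseteq> C" "emeasure M (D l) < \<infinity>" using D l by auto
    have Dj: "D j \<in> sets M" using D j by auto
    have tl: "t l \<in> L1 M" unfolding L1_def t_def using Dl by auto
    have dl0: "D l \<inter> A0 = {}" using Dl(2) n0 unfolding C_def A0_def by blast
    have e1: "t l x * (indicator A0 x + indicator (D j) x) = indicator (D l \<inter> D j) x" for x
      using dl0 unfolding t_def by (auto simp: indicator_def)
    have e2: "t l x * (indicator A0 x + indicator {} x) = 0" for x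
      using dl0 unfolding t_def by (auto simp: indicator_def)
    have "d j (t l) = (\<integral>x. indicator (D l \<inter> D j) x \<partial>M)"
      unfolding d_def X_def using tl by (simp only: e1 e2 if_True) simp
    also have "\<dots> = measure M (D l \<inter> D j)"
    proof -
      have "D l \<inter> D j \<inter> space M = D l \<inter> D j" using sets.sets_into_space[OF Dl(1)] by blast
      then show ?thesis by (simp only: Bochner_Integration.integral_indicator)
    qed
    finally show ?thesis .
  qed
  have "k \<le> card B"
  proof (rule lin_bound[OF B(1), where d = d and t = t])
    show "\<forall>j<k. \<exists>c. \<forall>f. d j f = (\<Sum>b\<in>B. c b * b f)"
      using Bsp XHB D unfolding d_def by blast
    fix j assume j: "j < k"
    have "0 < measure M (D j)"
    proof -
      have "emeasure M (D j) = ennreal (measure M (D j))"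
        using D j by (intro emeasure_eq_ennreal_measure) auto
      then show ?thesis using D j by auto
    qed
    then show "d j (t j) \<noteq> 0" using dval[OF j j] by simp
    fix l assume "l < k" "j \<noteq> l"
    then show "d j (t l) = 0" using dval[OF j] Dd j by (simp add: Int_commute)
  qed
  then show False using B(2) k1 by simp
qed

end
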